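(* Let $\mathcal P_X,\mathcal P_Y$ be probability measures on a measurable space $(E,\mathcal E)$ with $\mathcal P_Y\ll\mathcal P_X$, let $L=d\mathcal P_Y/d\mathcal P_X$, and assume $L(\mathbf Z)$ has a continuous distribution when $\mathbf Z\sim\mathcal P_X$. Let $\mathbf Z_X,\mathbf Z_X'$ be i.i.d. with law $\mathcal P_X$ and define $\delta:=\mathbb E\,|L(\mathbf Z_X)-L(\mathbf Z_X')|$. Then $$2\,d_{tv}(\mathcal P_X,\mathcal P_Y)\le \delta\le 4\,d_{tv}(\mathcal P_X,\mathcal P_Y).$$
   Context: $d_{tv}(\mathcal P_X,\mathcal P_Y)=\sup_{A\in\mathcal E}|\mathcal P_Y(A)-\mathcal P_X(A)|$ denotes the total variation distance. *)

theory Defs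
  imports "HOL-Probability.Probability"
begin

definition tv_dist :: "'a measure \<Rightarrow> 'a measure \<Rightarrow> real" where
  "tv_dist PX PY = (SUP A \<in> sets PX. \<bar>measure PY A - measure PX A\<bar>)"

end

theory Submission
  imports Defs
begin

theorem proposition2:
  fixes PX PY :: "'a measure" and L :: "'a \<Rightarrow> real"
  assumes "prob_space PX" and "prob_space PY"
    and "sets PY = sets PX"
    and "absolutely_continuous PX PY"
    and L_def: "L = (\<lambda>x. enn2real (RN_deriv PX PY x))"
    and cont: "\<forall>c. measure PX {x \<in> space PX. L x = c} = 0"
  shows "2 * tv_dist PX PY \<le> (\<integral>z. \<bar>L (fst z) - L (snd z)\<bar> \<partial>(PX \<Otimes>\<^sub>M PX))
       \<and> (\<integral>z. \<bar>L (fst z) - L (snd z)\<bar> \<partial>(PX \<Otimes>\<^sub>M PX)) \<le> 4 * tv_dist PX PY"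
proof -
  interpret X: prob_space PX by fact
  interpret Y: prob_space PY by fact
  interpret P: pair_sigma_finite PX PX ..
  have Ysf: "sigma_finite_measure PY" by unfold_locales
  have setsY: "sets PY = sets PX" by fact
  have spY: "space PY = space PX" using sets_eq_imp_space_eq[OF setsY] .
  have ac: "absolutely_continuous PX PY" by fact
  have Lm[measurable]: "L \<in> borel_measurable PX" unfolding L_def by measurable
  have Lnn: "\<And>x. 0 \<le> L x" unfolding L_def by simp
  have RNi: "\<And>f. f \<in> borel_measurable PX \<Longrightarrow> integrable PY f \<longleftrightarrow> integrable PX (\<lambda>x. L x * f x)"
    unfolding L_def using X.RN_deriv_integrable[OF Ysf ac setsY] by blast
  have RNI: "\<And>f. f \<in> borel_measurable PX \<Longrightarrow> integral\<^sup>L PY f = (\<integral>x. L x * f x \<partial>PX)"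
    unfolding L_def using X.RN_deriv_integral[OF Ysf ac setsY] by blast
  have intL: "integrable PX L"
    using RNi[of "\<lambda>_. 1"] by simp
  have int1: "(\<integral>x. L x \<partial>PX) = 1"
    using RNI[of "\<lambda>_. 1"] Y.prob_space by simp
  have measA: "measure PY A - measure PX A = (\<integral>x. indicator A x * (L x - 1) \<partial>PX)"
    if A: "A \<in> sets PX" for A
  proof -
    have "measure PY A = (\<integral>x. indicator A x \<partial>PY)"
      using A setsY sets.sets_into_space[OF A] spY by (simp add: Int_absorb2)
    also have "\<dots> = (\<integral>x. L x * indicator A x \<partial>PX)"
      using A by (intro RNI) simp
    finally have 1: "measure PY A = (\<integral>x. L x * indicator A x \<partial>PX)" .
    have 2: "measure PX A = (\<integral>x. indicator A x \<partial>PX)"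
      using sets.sets_into_space[OF A] by (simp add: Int_absorb2)
    have i1: "integrable PX (\<lambda>x. L x * indicator A x)"
      using integrable_mult_indicator[OF A intL] by (simp add: mult.commute)
    have i2: "integrable PX (\<lambda>x. indicator A x :: real)"
      using A by (intro integrable_real_indicator) (auto simp: X.emeasure_finite less_top[symmetric])
    have "(\<integral>x. indicator A x * (L x - 1) \<partial>PX) = (\<integral>x. L x * indicator A x - indicator A x \<partial>PX)"
      by (intro Bochner_Integration.integral_cong) (auto simp: algebra_simps)
    also have "\<dots> = (\<integral>x. L x * indicator A x \<partial>PX) - (\<integral>x. indicator A x \<partial>PX)"
      using i1 i2 by (rule Bochner_Integration.integral_diff)
    finally show ?thesis using 1 2 by simp
  qed
  define f where "f x = L x - 1" for x
  have fi: "integrable PX f" unfolding f_def using intL by auto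
  have fm[measurable]: "f \<in> borel_measurable PX" unfolding f_def by measurable
  have f0: "(\<integral>x. f x \<partial>PX) = 0" unfolding f_def using intL int1 X.prob_space by simp
  define D where "D = (\<integral>x. \<bar>f x\<bar> \<partial>PX)"
  have pos: "(\<integral>x. (\<bar>f x\<bar> + f x) / 2 \<partial>PX) = D / 2"
    using fi f0 by (simp add: D_def)
  have neg: "(\<integral>x. - ((\<bar>f x\<bar> - f x) / 2) \<partial>PX) = - (D / 2)"
    using fi f0 by (simp add: D_def)
  have ip: "integrable PX (\<lambda>x. (\<bar>f x\<bar> + f x) / 2)" using fi by auto
  have ineg: "integrable PX (\<lambda>x. - ((\<bar>f x\<bar> - f x) / 2))" using fi by auto
  have claim1: "\<bar>measure PY A - measure PX A\<bar> \<le> D / 2" if A: "A \<in> sets PX" for A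
  proof -
    have gi: "integrable PX (\<lambda>x. indicator A x * f x)"
      using integrable_mult_indicator[OF A fi] by simp
    have u: "(\<integral>x. indicator A x * f x \<partial>PX) \<le> (\<integral>x. (\<bar>f x\<bar> + f x) / 2 \<partial>PX)"
      by (rule integral_mono[OF gi ip]) (auto simp: indicator_def abs_if)
    have l: "(\<integral>x. - ((\<bar>f x\<bar> - f x) / 2) \<partial>PX) \<le> (\<integral>x. indicator A x * f x \<partial>PX)"
      by (rule integral_mono[OF ineg gi]) (auto simp: indicator_def abs_if)
    show ?thesis using measA[OF A] u l pos neg unfolding f_def by auto
  qed
  define A0 where "A0 = {x \<in> space PX. L x > 1}"
  have A0: "A0 \<in> sets PX" unfolding A0_def by measurable
  have claim2: "measure PY A0 - measure PX A0 = D / 2"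
  proof -
    have "(\<integral>x. indicator A0 x * f x \<partial>PX) = (\<integral>x. (\<bar>f x\<bar> + f x) / 2 \<partial>PX)"
      by (intro Bochner_Integration.integral_cong) (auto simp: indicator_def A0_def f_def)
    then show ?thesis using measA[OF A0] pos unfolding f_def by simp
  qed
  have bdd: "bdd_above ((\<lambda>A. \<bar>measure PY A - measure PX A\<bar>) ` sets PX)"
    using claim1 by (intro bdd_aboveI2[where M="D/2"]) auto
  have tv: "tv_dist PX PY = D / 2"
  proof (rule antisym)
    show "tv_dist PX PY \<le> D / 2"
      unfolding tv_dist_def using claim1 sets.empty_sets by (intro cSUP_least) auto
    show "D / 2 \<le> tv_dist PX PY"
      unfolding tv_dist_def using claim2 A0 bdd by (intro cSUP_upper2[of _ _ A0]) (auto simp: abs_if)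
  qed
  define F where "F z = \<bar>L (fst z) - L (snd z)\<bar>" for z
  have Fm[measurable]: "F \<in> borel_measurable (PX \<Otimes>\<^sub>M PX)" unfolding F_def by measurable
  have ifst: "integrable (PX \<Otimes>\<^sub>M PX) (\<lambda>z. L (fst z))"
  proof -
    have "integrable (distr (PX \<Otimes>\<^sub>M PX) PX fst) L" using X.distr_pair_fst[of PX] intL by simp
    then show ?thesis by (subst (asm) integrable_distr_eq) auto
  qed
  have isnd: "integrable (PX \<Otimes>\<^sub>M PX) (\<lambda>z. L (snd z))"
  proof -
    have "integrable (PX \<Otimes>\<^sub>M PX) (\<lambda>(x,y). L (snd (y,x)))"
      using ifst by (simp add: case_prod_beta')
    then show ?thesis using P.integrable_product_swap_iff[of "\<lambda>z. L (snd z)"] by simp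
  qed
  have Fi: "integrable (PX \<Otimes>\<^sub>M PX) F"
    by (rule Bochner_Integration.integrable_bound[OF Bochner_Integration.integrable_add[OF ifst isnd] Fm])
       (auto simp: F_def Lnn abs_le_iff intro!: AE_I2 add_nonneg_nonneg)
  have delta: "(\<integral>z. F z \<partial>(PX \<Otimes>\<^sub>M PX)) = (\<integral>x. (\<integral>y. F (x, y) \<partial>PX) \<partial>PX)"
    using P.integral_fst'[OF Fi] by simp
  have Gi: "integrable PX (\<lambda>x. \<integral>y. F (x, y) \<partial>PX)"
    using P.integrable_fst'[OF Fi] .
  have inner_i: "integrable PX (\<lambda>y. F (x, y))" for x
    unfolding F_def using intL by auto
  have iabs: "integrable PX (\<lambda>y. c + \<bar>f y\<bar>)" for c
    using fi by auto
  have iabs2: "integrable PX (\<lambda>y. \<bar>f y\<bar> + c)" for c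
    using fi by auto
  have lo: "\<bar>f x\<bar> \<le> (\<integral>y. F (x, y) \<partial>PX)" for x
  proof -
    have "(\<integral>y. L x - L y \<partial>PX) = L x - 1"
      using intL int1 X.prob_space by simp
    moreover have "norm (\<integral>y. L x - L y \<partial>PX) \<le> (\<integral>y. norm (L x - L y) \<partial>PX)"
      by (rule integral_norm_bound)
    ultimately show ?thesis by (simp add: F_def f_def)
  qed
  have hi: "(\<integral>y. F (x, y) \<partial>PX) \<le> \<bar>f x\<bar> + D" for x
  proof -
    have "(\<integral>y. F (x, y) \<partial>PX) \<le> (\<integral>y. \<bar>f x\<bar> + \<bar>f y\<bar> \<partial>PX)"
      by (rule integral_mono[OF inner_i iabs]) (auto simp: F_def f_def)
    also have "\<dots> = \<bar>f x\<bar> + D"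
      using fi X.prob_space by (simp add: D_def)
    finally show ?thesis .
  qed
  have d1: "D \<le> (\<integral>z. F z \<partial>(PX \<Otimes>\<^sub>M PX))"
    unfolding delta D_def using fi Gi lo by (intro integral_mono) auto
  have d2: "(\<integral>z. F z \<partial>(PX \<Otimes>\<^sub>M PX)) \<le> 2 * D"
  proof -
    have "(\<integral>x. (\<integral>y. F (x, y) \<partial>PX) \<partial>PX) \<le> (\<integral>x. \<bar>f x\<bar> + D \<partial>PX)"
      by (rule integral_mono[OF Gi iabs2]) (rule hi)
    also have "\<dots> = 2 * D" using fi X.prob_space by (simp add: D_def)
    finally show ?thesis unfolding delta .
  qed
  show ?thesis using d1 d2 tv unfolding F_def by simp
qed

end
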